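(* Let $m \ge 1$ and let $A_1,\dots,A_m$ be $d$-dimensional boxes forming a set of Gozinta Boxes, i.e. both the natural order $A_1,A_2,\dots,A_m$ and the reverse order $A_m,\dots,A_1$ (listed from innermost to outermost) are possible arrangements. Fix states of the boxes realizing these two arrangements. Then at least $m-1$ of the boxes are, in at least one of the two arrangements, expanded along their smallest side (a side whose closed length is the minimum closed side length of that box).
   Context: A $d$-dimensional box $A$ has closed side lengths $a_1\le a_2\le\dots\le a_d$ (positive reals). A state of $A$ is either closed (side lengths $a_1,\dots,a_d$) or expanded along one side $i$: the side $a_i$ is replaced by a length $a_i'$ with $a_i\le a_i'\le 2a_i$ (expansion bound), all other sides unchanged; only one side can expand. The dimension vector of a state is its multiset of side lengths sorted in non-decreasing order. A box $X$ in some state fits inside a box $Y$ in some state if every coordinate of the dimension vector of $Y$ is strictly larger than the corresponding coordinate of the dimension vector of $X$. An order $X_1,\dots,X_k$ (innermost to outermost) of a collection of boxes is a possible arrangement if each box can be assigned a state so that $X_j$ fits inside $X_{j+1}$ for all $j$; a box may be in different states in different arrangements. *)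

theory Defs
  imports Complex_Main
begin

text \<open>A d-dimensional box is given by the list of its closed side lengths
  a_1 \<le> ... \<le> a_d (positive reals).\<close>
definition is_box :: "nat \<Rightarrow> real list \<Rightarrow> bool" where
  "is_box d a \<longleftrightarrow> length a = d \<and> sorted a \<and> (\<forall>x\<in>set a. x > 0)"

text \<open>A state: None = closed; Some (i, l) = expanded along side i (0-based)
  with new length l.\<close>
type_synonym box_state = "(nat \<times> real) option"

definition valid_state :: "real list \<Rightarrow> box_state \<Rightarrow> bool" where
  "valid_state a st = (case st of None \<Rightarrow> True
     | Some (i, l) \<Rightarrow> i < length a \<and> a ! i \<le> l \<and> l \<le> 2 * a ! i)"

definition dimvec :: "real list \<Rightarrow> box_state \<Rightarrow> real list" where
  "dimvec a st = (case st of None \<Rightarrow> sort a | Some (i, l) \<Rightarrow> sort (a[i := l]))"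

definition fits_in :: "real list \<Rightarrow> box_state \<Rightarrow> real list \<Rightarrow> box_state \<Rightarrow> bool" where
  "fits_in a s b t \<longleftrightarrow> length (dimvec a s) = length (dimvec b t) \<and>
     (\<forall>k < length (dimvec a s). dimvec a s ! k < dimvec b t ! k)"

definition expanded_smallest :: "real list \<Rightarrow> box_state \<Rightarrow> bool" where
  "expanded_smallest a st \<longleftrightarrow> (\<exists>i l. st = Some (i, l) \<and> i < length a \<and> a ! i = Min (set a))"

end

theory Submission
  imports Defs
begin

lemma sort_nth0_Min:
  fixes x :: "real list"
  assumes "x \<noteq> []"
  shows "sort x ! 0 = Min (set x)"
proof -
  let ?y = "sort x"
  have ne: "?y \<noteq> []" using assms by (metis length_0_conv length_sort)
  have mem: "?y ! 0 \<in> set x" using ne by (metis length_greater_0_conv nth_mem set_sort)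
  have le: "\<forall>z\<in>set x. ?y ! 0 \<le> z"
  proof
    fix z assume "z \<in> set x"
    then obtain k where k: "k < length ?y" "?y ! k = z" by (metis in_set_conv_nth set_sort)
    show "?y ! 0 \<le> z" using k sorted_nth_mono[OF sorted_sort, of 0 k x] by simp
  qed
  show ?thesis using mem le by (intro Min_eqI[symmetric]) auto
qed

lemma len_dimvec: "length (dimvec a st) = length a"
  by (auto simp: dimvec_def split: option.splits)

lemma dimvec0:
  assumes "is_box d a" "d \<ge> 1" "valid_state a st" "\<not> expanded_smallest a st"
  shows "dimvec a st ! 0 = Min (set a)"
proof (cases st)
  case None
  have "a \<noteq> []" using assms(1,2) unfolding is_box_def by auto
  then show ?thesis using None sort_nth0_Min by (simp add: dimvec_def)
next
  case (Some p)
  obtain i l where p: "st = Some (i, l)" using Some by (cases p) auto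
  have ne: "a \<noteq> []" using assms(1,2) unfolding is_box_def by auto
  have il: "i < length a" "a ! i \<le> l" using assms(3) p by (auto simp: valid_state_def)
  have ni: "a ! i \<noteq> Min (set a)" using assms(4) p il by (auto simp: expanded_smallest_def)
  have sa: "sorted a" using assms(1) by (simp add: is_box_def)
  have m0: "Min (set a) = a ! 0" using sort_nth0_Min[OF ne] sa by (simp add: sorted_sort_id)
  have i0: "i \<noteq> 0" using ni m0 by (metis)
  have ge: "\<forall>z\<in>set a. a ! 0 \<le> z" using m0 ne by (metis Min_le List.finite_set)
  have "Min (set (a[i := l])) = a ! 0"
  proof (rule Min_eqI)
    show "finite (set (a[i := l]))" by simp
    show "a ! 0 \<in> set (a[i := l])" using i0 ne
      by (metis length_greater_0_conv length_list_update nth_list_update_neq nth_mem)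
    fix y assume "y \<in> set (a[i := l])"
    then have "y \<in> set a \<or> y = l" using set_update_subset_insert by fastforce
    moreover have "a ! 0 \<le> l" using ge il by (meson nth_mem order_trans)
    ultimately show "a ! 0 \<le> y" using ge by auto
  qed
  moreover have "a[i := l] \<noteq> []" using ne by simp
  ultimately show ?thesis using p m0 sort_nth0_Min by (simp add: dimvec_def)
qed

lemma chain:
  fixes g :: "nat \<Rightarrow> real"
  assumes "\<forall>j\<in>{1..<m}. g j < g (j + 1)" "1 \<le> j" "j < k" "k \<le> m"
  shows "g j < g k"
  using assms(3,4)
proof (induction k)
  case 0
  then show ?case by simp
next
  case (Suc n)
  show ?case
  proof (cases "j = n")
    case True
    then show ?thesis using assms(1,2) Suc.prems by auto
  next
    case False
    then have "g j < g n" using Suc by auto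
    moreover have "g n < g (n + 1)" using assms(1,2) Suc.prems False by auto
    ultimately show ?thesis by simp
  qed
qed

theorem proposition7:
  fixes d m :: nat and A :: "nat \<Rightarrow> real list" and s t :: "nat \<Rightarrow> box_state"
  assumes "d \<ge> 1" and "m \<ge> 1"
    and boxes: "\<forall>j\<in>{1..m}. is_box d (A j)"
    and s_valid: "\<forall>j\<in>{1..m}. valid_state (A j) (s j)"
    and s_arr: "\<forall>j\<in>{1..<m}. fits_in (A j) (s j) (A (j + 1)) (s (j + 1))"
    and t_valid: "\<forall>j\<in>{1..m}. valid_state (A j) (t j)"
    and t_arr: "\<forall>j\<in>{1..<m}. fits_in (A (j + 1)) (t (j + 1)) (A j) (t j)"
  shows "card {j \<in> {1..m}. expanded_smallest (A j) (s j) \<or> expanded_smallest (A j) (t j)} \<ge> m - 1"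
proof -
  define P where "P j \<longleftrightarrow> expanded_smallest (A j) (s j) \<or> expanded_smallest (A j) (t j)" for j
  define gs where "gs j = dimvec (A j) (s j) ! 0" for j
  define gt where "gt j = - (dimvec (A j) (t j) ! 0)" for j
  have len: "\<And>j. j \<in> {1..m} \<Longrightarrow> length (A j) = d" using boxes by (auto simp: is_box_def)
  have gs_step: "\<forall>j\<in>{1..<m}. gs j < gs (j + 1)"
  proof
    fix j assume j: "j \<in> {1..<m}"
    have "0 < length (dimvec (A j) (s j))" using len[of j] j assms(1) by (simp add: len_dimvec)
    then show "gs j < gs (j + 1)" using s_arr j unfolding fits_in_def gs_def by blast
  qed
  have gt_step: "\<forall>j\<in>{1..<m}. gt j < gt (j + 1)"
  proof
    fix j assume j: "j \<in> {1..<m}"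
    have "0 < length (dimvec (A (j+1)) (t (j+1)))" using len[of "j+1"] j assms(1) by (simp add: len_dimvec)
    then have "dimvec (A (j+1)) (t (j+1)) ! 0 < dimvec (A j) (t j) ! 0"
      using t_arr j unfolding fits_in_def by blast
    then show "gt j < gt (j + 1)" unfolding gt_def by simp
  qed
  let ?S = "{j \<in> {1..m}. P j}"
  let ?B = "{j \<in> {1..m}. \<not> P j}"
  have B: "card ?B \<le> 1"
  proof (rule ccontr)
    assume "\<not> card ?B \<le> 1"
    then obtain x y where xy: "x \<in> ?B" "y \<in> ?B" "x \<noteq> y" using card_le_Suc0_iff_eq[of ?B] by fastforce
    have key: False if a: "j \<in> ?B" "k \<in> ?B" "j < k" for j k
    proof -
      have ms: "gs j = Min (set (A j))" "gs k = Min (set (A k))"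
        using a dimvec0[OF _ assms(1)] boxes s_valid unfolding gs_def P_def by auto
      have mt: "gt j = - Min (set (A j))" "gt k = - Min (set (A k))"
        using a dimvec0[OF _ assms(1)] boxes t_valid unfolding gt_def P_def by auto
      have "gs j < gs k" using chain[OF gs_step, of j k] a by auto
      moreover have "gt j < gt k" using chain[OF gt_step, of j k] a by auto
      ultimately show False using ms mt by auto
    qed
    show False using xy key by (metis linorder_neqE_nat)
  qed
  have un: "{1..m} = ?S \<union> ?B" by auto
  have cu: "card (?S \<union> ?B) = card ?S + card ?B"
    by (rule card_Un_disjoint) auto
  have "card {1..m} = card ?S + card ?B"
    using cu un by metis
  then have "card ?S \<ge> m - 1" using B by simp
  then show ?thesis unfolding P_def by simp
qed

end
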